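(* Let $\mathcal{M}\subseteq\mathbb{R}^d$ be a compact embedded $C^2$-submanifold without boundary with reach $\tau_{\mathcal{M}}>0$, let $f\in C^1(\mathbb{R}^d)$ with $\nabla f$ Lipschitz on $\mathcal{T}(\tau_{\mathcal{M}})$, set $C=\sup_{\mathcal{T}(\tau_{\mathcal{M}})}\|\nabla f\|$ and $L=\operatorname{Lip}(\nabla f|_{\mathcal{T}(\tau_{\mathcal{M}})})$, and let $\eta\ge0$. Let $\tau\in(0,\tau_{\mathcal{M}})$, $\epsilon>0$, and $s\in C^1(\mathbb{R}^d;\mathbb{R}^d)$ with $$\|s(x)-\pi(x)\|<\epsilon,\qquad\|s'(x)-P_0(x)\|<\epsilon\qquad\text{for all }x\in\mathcal{T}(\tau),$$ and suppose $s(\mathcal{T}(\tau))\subseteq\mathcal{T}(\tau)$. Let $\tilde\tau\in(0,\tau]$, $\delta>0$, and let $x_*\in\mathcal{T}(\tilde\tau)$ satisfy $\|G_s^\eta(x_* )\|\le\delta$, where $G_s^\eta(x)=s'(x)\nabla f(s(x))+\eta(x-s(x))$. Then $p_*=\pi(x_* )$ satisfies $$\|\operatorname{grad}_{\mathcal{M}}f(p_* )\|\le2(L+C+\eta)\epsilon+2\,\frac{\tilde\tau/\tau_{\mathcal{M}}}{1-\tilde\tau/\tau_{\mathcal{M}}}\,C+\delta.$$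
   Context: Reach $\tau_{\mathcal{M}}$: largest $\tau\ge0$ such that $(p,v)\mapsto p+v$ on $\{(p,v):p\in\mathcal{M},v\in N_p\mathcal{M},\|v\|<\tau\}$ is a diffeomorphism onto its image; $\mathcal{T}(\tau)=\{p+v:p\in\mathcal{M},v\in N_p\mathcal{M},\|v\|<\tau\}$; $\pi(x)$ is the unique closest point of $\mathcal{M}$ to $x$, $P_0(x)=\pi'(x)$ its Jacobian. $\operatorname{grad}_{\mathcal{M}}f(p)=P_{T_p\mathcal{M}}\nabla f(p)$ for $p\in\mathcal{M}$. *)

theory Defs
  imports "HOL-Analysis.Analysis"
begin

definition C1_on :: "'a::real_normed_vector set \<Rightarrow> ('a \<Rightarrow> 'b::real_normed_vector) \<Rightarrow> bool" where
  "C1_on U g \<longleftrightarrow> (\<exists>g'. (\<forall>x\<in>U. (g has_derivative blinfun_apply (g' x)) (at x)) \<and> continuous_on U g')"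

definition C2_on :: "'a::real_normed_vector set \<Rightarrow> ('a \<Rightarrow> 'b::real_normed_vector) \<Rightarrow> bool" where
  "C2_on U g \<longleftrightarrow> (\<exists>g'. (\<forall>x\<in>U. (g has_derivative blinfun_apply (g' x)) (at x)) \<and> C1_on U g')"

definition C2_submanifold :: "'a::euclidean_space set \<Rightarrow> bool" where
  "C2_submanifold M \<longleftrightarrow> (\<forall>p\<in>M. \<exists>U V (\<phi>::'a\<Rightarrow>'a) \<psi> E.
     open U \<and> p \<in> U \<and> open V \<and> homeomorphism U V \<phi> \<psi> \<and> C2_on U \<phi> \<and> C2_on V \<psi> \<and>
     subspace E \<and> \<phi> ` (M \<inter> U) = V \<inter> E)"

definition tangent_space :: "'a::euclidean_space set \<Rightarrow> 'a \<Rightarrow> 'a set" where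
  "tangent_space M p = {v. \<exists>\<gamma> e. e > 0 \<and> (\<forall>t\<in>{-e<..<e}. \<gamma> t \<in> M) \<and> \<gamma> 0 = p \<and>
      (\<gamma> has_vector_derivative v) (at 0)}"

definition normal_space :: "'a::euclidean_space set \<Rightarrow> 'a \<Rightarrow> 'a set" where
  "normal_space M p = {v. \<forall>w\<in>tangent_space M p. v \<bullet> w = 0}"

definition orth_proj :: "'a::euclidean_space set \<Rightarrow> 'a \<Rightarrow> 'a" where
  "orth_proj T g = (THE t. t \<in> T \<and> (\<forall>w\<in>T. (g - t) \<bullet> w = 0))"

definition normal_bundle :: "'a::euclidean_space set \<Rightarrow> real \<Rightarrow> ('a \<times> 'a) set" where
  "normal_bundle M r = {(p, v). p \<in> M \<and> v \<in> normal_space M p \<and> norm v < r}"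

definition tube :: "'a::euclidean_space set \<Rightarrow> real \<Rightarrow> 'a set" where
  "tube M r = (\<lambda>(p, v). p + v) ` normal_bundle M r"

text \<open>(p,v) |-> p+v is a (C^1) diffeomorphism of the radius-r normal bundle onto its image:
  injective, with open image, and with a C^1 inverse on the image.\<close>
definition reach_ok :: "'a::euclidean_space set \<Rightarrow> real \<Rightarrow> bool" where
  "reach_ok M r \<longleftrightarrow> inj_on (\<lambda>(p, v). p + v) (normal_bundle M r) \<and> open (tube M r) \<and>
     (\<exists>g. C1_on (tube M r) g \<and> (\<forall>z\<in>normal_bundle M r. g ((\<lambda>(p, v). p + v) z) = z))"

definition is_reach :: "'a::euclidean_space set \<Rightarrow> real \<Rightarrow> bool" where
  "is_reach M r \<longleftrightarrow> r \<ge> 0 \<and> reach_ok M r \<and> (\<forall>r'. r' \<ge> 0 \<and> reach_ok M r' \<longrightarrow> r' \<le> r)"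

definition closest_point :: "'a::euclidean_space set \<Rightarrow> 'a \<Rightarrow> 'a" where
  "closest_point M x = (THE p. p \<in> M \<and> (\<forall>q\<in>M. dist x p \<le> dist x q))"

definition manifold_grad :: "'a::euclidean_space set \<Rightarrow> ('a \<Rightarrow> 'a) \<Rightarrow> 'a \<Rightarrow> 'a" where
  "manifold_grad M gradf p = orth_proj (tangent_space M p) (gradf p)"

end

theory Submission
  imports Defs
begin


lemma reach_ok_empty: "reach_ok ({}::'a::euclidean_space set) r"
  unfolding reach_ok_def normal_bundle_def tube_def C1_on_def
  by (auto intro!: exI[of _ "\<lambda>_. 0"])

lemma normal_space_subspace: "subspace (normal_space M p)"
  unfolding subspace_def normal_space_def by (auto simp: inner_add_left)

locale rset =
  fixes M :: "'a::euclidean_space set" and tM :: real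
  assumes cM: "compact M" and reach: "is_reach M tM" and tpos: "tM > 0"
begin

lemma M_ne: "M \<noteq> {}"
proof
  assume "M = {}"
  then have "reach_ok M (tM + 1)" using reach_ok_empty by simp
  moreover from reach have H: "\<forall>r'. 0 \<le> r' \<and> reach_ok M r' \<longrightarrow> r' \<le> tM" by (simp add: is_reach_def)
  ultimately have "tM + 1 \<le> tM" using tpos H[rule_format, of "tM+1"] by simp
  then show False by simp
qed

lemma rok: "reach_ok M tM" using reach unfolding is_reach_def by auto

lemma FO:
  assumes q: "q \<in> M" and mn: "\<forall>q'\<in>M. dist y q \<le> dist y q'"
  shows "y - q \<in> normal_space M q"
  unfolding normal_space_def
proof safe
  fix w assume "w \<in> tangent_space M q"
  then obtain \<gamma> e where e: "e > 0" and g: "\<forall>t\<in>{-e<..<e}. \<gamma> t \<in> M" and g0: "\<gamma> 0 = q"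
    and gd: "(\<gamma> has_vector_derivative w) (at 0)" unfolding tangent_space_def by blast
  have D: "((\<lambda>t. (y - \<gamma> t) \<bullet> (y - \<gamma> t)) has_real_derivative (- 2 * ((y - q) \<bullet> w))) (at 0)"
  proof -
    have d1: "((\<lambda>t. y - \<gamma> t) has_vector_derivative - w) (at 0)"
      by (rule has_vector_derivative_eq_rhs[OF has_vector_derivative_diff[OF has_vector_derivative_const gd]]) simp
    then have "((\<lambda>t. (y - \<gamma> t) \<bullet> (y - \<gamma> t)) has_vector_derivative
        ((y - \<gamma> 0) \<bullet> (- w) + (- w) \<bullet> (y - \<gamma> 0))) (at 0)"
      using bounded_bilinear.has_vector_derivative[OF bounded_bilinear_inner d1 d1] by simp
    moreover have "(y - \<gamma> 0) \<bullet> (- w) + (- w) \<bullet> (y - \<gamma> 0) = - 2 * ((y - q) \<bullet> w)"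
      using g0 by (simp add: inner_commute)
    ultimately show ?thesis
      by (simp only: has_real_derivative_iff_has_vector_derivative)
  qed
  have "- 2 * ((y - q) \<bullet> w) = 0"
  proof (rule DERIV_local_min[OF D e])
    show "\<forall>t. \<bar>0 - t\<bar> < e \<longrightarrow> (y - \<gamma> 0) \<bullet> (y - \<gamma> 0) \<le> (y - \<gamma> t) \<bullet> (y - \<gamma> t)"
    proof safe
      fix t :: real assume "\<bar>0 - t\<bar> < e"
      then have "\<gamma> t \<in> M" using g by (auto simp: abs_less_iff)
      then have "dist y q \<le> dist y (\<gamma> t)" using mn by auto
      then have "(dist y q)^2 \<le> (dist y (\<gamma> t))^2" by (rule power_mono) simp
      then have "(norm (y - \<gamma> 0))^2 \<le> (norm (y - \<gamma> t))^2" by (simp only: g0 dist_norm)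
      then show "(y - \<gamma> 0) \<bullet> (y - \<gamma> 0) \<le> (y - \<gamma> t) \<bullet> (y - \<gamma> t)"
        by (simp only: power2_norm_eq_inner)
    qed
  qed
  then show "(y - q) \<bullet> w = 0" by simp
qed

lemma exists_min: "\<exists>q\<in>M. \<forall>q'\<in>M. dist y q \<le> dist y q'"
proof -
  have "continuous_on M (\<lambda>q. dist y q)" by (intro continuous_intros)
  then show ?thesis using continuous_attains_inf[OF cM M_ne, of "\<lambda>q. dist y q"] by blast
qed

lemma CP:
  assumes p: "p \<in> M" and n: "n \<in> normal_space M p" and nn: "norm n < tM"
  shows "closest_point M (p + n) = p" "\<forall>q\<in>M. dist (p + n) p \<le> dist (p + n) q"
proof -
  have inj: "inj_on (\<lambda>(p, v). p + v) (normal_bundle M tM)" using rok unfolding reach_ok_def by auto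
  have uniq: "q = p" if q: "q \<in> M" "\<forall>q'\<in>M. dist (p+n) q \<le> dist (p+n) q'" for q
  proof -
    have "p + n - q \<in> normal_space M q" using FO[OF q] .
    moreover have "norm (p + n - q) < tM"
    proof -
      have "dist (p + n) q \<le> dist (p + n) p" using q(2) p by blast
      then have "norm (p + n - q) \<le> norm n" by (simp add: dist_norm)
      then show ?thesis using nn by linarith
    qed
    ultimately have b1: "(q, p + n - q) \<in> normal_bundle M tM" using q unfolding normal_bundle_def by auto
    have b2: "(p, n) \<in> normal_bundle M tM" using p n nn unfolding normal_bundle_def by auto
    have "(\<lambda>(p, v). p + v) (q, p + n - q) = (\<lambda>(p, v). p + v) (p, n)" by simp
    then have "(q, p + n - q) = (p, n)" by (rule inj_onD[OF inj _ b1 b2])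
    then have "fst (q, p + n - q) = fst (p, n)" by (rule arg_cong)
    then show "q = p" by (simp only: fst_conv)
  qed
  obtain q where q: "q \<in> M" "\<forall>q'\<in>M. dist (p+n) q \<le> dist (p+n) q'" using exists_min by blast
  then have "q = p" using uniq by blast
  with q show mn: "\<forall>q\<in>M. dist (p + n) p \<le> dist (p + n) q" by auto
  show "closest_point M (p + n) = p" unfolding closest_point_def
  proof (rule the_equality)
    show "p \<in> M \<and> (\<forall>q\<in>M. dist (p + n) p \<le> dist (p + n) q)" using p mn by blast
    show "\<And>x. x \<in> M \<and> (\<forall>q\<in>M. dist (p + n) x \<le> dist (p + n) q) \<Longrightarrow> x = p" using uniq by blast
  qed
qed

lemma tube_cp:
  assumes y: "y \<in> tube M r" and r: "r \<le> tM"
  shows "closest_point M y \<in> M" "y - closest_point M y \<in> normal_space M (closest_point M y)"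
    "norm (y - closest_point M y) < r" "\<forall>q\<in>M. dist y (closest_point M y) \<le> dist y q"
proof -
  obtain p n where pn: "p \<in> M" "n \<in> normal_space M p" "norm n < r" "y = p + n"
    using y unfolding tube_def normal_bundle_def by auto
  then have c: "closest_point M y = p" "\<forall>q\<in>M. dist y p \<le> dist y q" using CP[of p n] r by auto
  show "closest_point M y \<in> M" "y - closest_point M y \<in> normal_space M (closest_point M y)"
    "norm (y - closest_point M y) < r" "\<forall>q\<in>M. dist y (closest_point M y) \<le> dist y q"
    using c pn by simp_all
qed

lemma M_tube: "p \<in> M \<Longrightarrow> p \<in> tube M r \<longleftrightarrow> r > 0"
proof
  assume "p \<in> M" "p \<in> tube M r"
  then obtain z where "z \<in> normal_bundle M r" unfolding tube_def by auto
  then obtain p' v where "z = (p', v)" "norm v < r" unfolding normal_bundle_def by auto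
  then show "r > 0" using norm_ge_zero[of v] by linarith
next
  assume "p \<in> M" "r > 0"
  then have "(p, 0) \<in> normal_bundle M r" unfolding normal_bundle_def normal_space_def by auto
  then show "p \<in> tube M r" unfolding tube_def by force
qed

lemma Federer:
  assumes p: "p \<in> M" and n: "n \<in> normal_space M p" and q: "q \<in> M" and T: "0 < T" "T < tM"
  shows "2 * T * (n \<bullet> (q - p)) \<le> norm n * (norm (q - p))^2"
proof (cases "n = 0")
  case True then show ?thesis by simp
next
  case False
  define n' where "n' = (T / norm n) *\<^sub>R n"
  have nn': "norm n' = T" using False T by (simp add: n'_def)
  have "n' \<in> normal_space M p" unfolding n'_def
    using n normal_space_subspace subspace_scale by blast
  then have "dist (p + n') p \<le> dist (p + n') q" using CP(2)[of p n'] p q nn' T by auto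
  then have "(norm n')^2 \<le> (norm (p + n' - q))^2" by (simp add: dist_norm power_mono)
  also have "(norm (p + n' - q))^2 = (norm n')^2 - 2 * (n' \<bullet> (q - p)) + (norm (q - p))^2"
    by (simp add: power2_norm_eq_inner inner_diff_left inner_diff_right inner_add_left inner_add_right inner_commute)
  finally have "2 * (n' \<bullet> (q - p)) \<le> (norm (q - p))^2" by simp
  then have "2 * T * (n \<bullet> (q - p)) / norm n \<le> (norm (q - p))^2" by (simp add: n'_def)
  moreover have "norm n > 0" using False by simp
  ultimately show ?thesis by (simp add: pos_divide_le_eq mult.commute)
qed

end


lemma dq:
  fixes f :: "real \<Rightarrow> 'a::real_normed_vector"
  assumes "(f has_derivative (\<lambda>t. t *\<^sub>R D)) (at 0)"
  shows "((\<lambda>t. (f t - f 0) /\<^sub>R t) \<longlongrightarrow> D) (at_right 0)"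
proof -
  have "((\<lambda>y. norm ((f y - f 0) - (y - 0) *\<^sub>R D) / norm (y - 0)) \<longlongrightarrow> 0) (at 0)"
    using assms unfolding has_derivative_iff_norm by simp
  then have "((\<lambda>y. norm ((f y - f 0) /\<^sub>R y - D)) \<longlongrightarrow> 0) (at 0)"
  proof (rule Lim_transform_eventually)
    have "norm ((f y - f 0) - (y - 0) *\<^sub>R D) / norm (y - 0) = norm ((f y - f 0) /\<^sub>R y - D)"
      if "y \<noteq> 0" for y
    proof -
      have "(f y - f 0) /\<^sub>R y - D = inverse y *\<^sub>R ((f y - f 0) - y *\<^sub>R D)"
        using that by (simp add: scaleR_diff_right)
      then show ?thesis by (simp add: divide_inverse_commute)
    qed
    then show "\<forall>\<^sub>F y in at 0. norm ((f y - f 0) - (y - 0) *\<^sub>R D) / norm (y - 0) = norm ((f y - f 0) /\<^sub>R y - D)"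
      unfolding eventually_at_filter by (auto intro: always_eventually)
  qed
  then have "((\<lambda>y. (f y - f 0) /\<^sub>R y - D) \<longlongrightarrow> 0) (at 0)" by (rule tendsto_norm_zero_cancel)
  then have "((\<lambda>y. (f y - f 0) /\<^sub>R y) \<longlongrightarrow> D) (at 0)" by (rule LIM_zero_cancel)
  then show ?thesis by (rule tendsto_within_subset) simp
qed

context rset begin

lemma open_tube: "open (tube M tM)" using rok unfolding reach_ok_def by auto

lemma tube_mono: "r \<le> r' \<Longrightarrow> tube M r \<subseteq> tube M r'"
  unfolding tube_def normal_bundle_def by (rule image_mono) auto

lemma diff_ex: "\<exists>D. (\<forall>y\<in>tube M tM. (closest_point M has_derivative D y) (at y)) \<and>
   (\<forall>h. continuous_on (tube M tM) (\<lambda>y. D y h))"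
proof -
  obtain g where gC: "C1_on (tube M tM) g"
    and gi: "\<forall>z\<in>normal_bundle M tM. g ((\<lambda>(p, v). p + v) z) = z"
    using rok unfolding reach_ok_def by blast
  obtain g' where gd: "\<forall>x\<in>tube M tM. (g has_derivative blinfun_apply (g' x)) (at x)"
    and gc: "continuous_on (tube M tM) g'" using gC unfolding C1_on_def by blast
  have eq: "fst (g y) = closest_point M y" if "y \<in> tube M tM" for y
  proof -
    from that obtain z where z: "z \<in> normal_bundle M tM" "y = (\<lambda>(p, v). p + v) z"
      unfolding tube_def by blast
    obtain p n where "z = (p, n)" by (cases z)
    then have pn: "(p, n) \<in> normal_bundle M tM" "y = p + n" using z by auto
    then have "g y = (p, n)" using gi by force
    moreover have "closest_point M y = p" using CP(1) pn unfolding normal_bundle_def by auto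
    ultimately show ?thesis by simp
  qed
  show ?thesis
  proof (rule exI[of _ "\<lambda>y h. fst (blinfun_apply (g' y) h)"], intro conjI ballI allI)
    fix y assume y: "y \<in> tube M tM"
    have "((\<lambda>z. fst (g z)) has_derivative (\<lambda>h. fst (blinfun_apply (g' y) h))) (at y)"
      using gd y by (auto intro: has_derivative_fst)
    then show "(closest_point M has_derivative (\<lambda>h. fst (blinfun_apply (g' y) h))) (at y)"
      by (rule has_derivative_transform_within_open[OF _ open_tube y]) (simp add: eq)
  next
    fix h show "continuous_on (tube M tM) (\<lambda>y. fst (blinfun_apply (g' y) h))"
      by (intro continuous_intros gc)
  qed
qed

definition Dp :: "'a \<Rightarrow> 'a \<Rightarrow> 'a" where
  "Dp = (SOME D. (\<forall>y\<in>tube M tM. (closest_point M has_derivative D y) (at y)) \<and>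
   (\<forall>h. continuous_on (tube M tM) (\<lambda>y. D y h)))"

lemma Dp_deriv: "y \<in> tube M tM \<Longrightarrow> (closest_point M has_derivative Dp y) (at y)"
  using someI_ex[OF diff_ex] unfolding Dp_def by blast

lemma Dp_cont: "continuous_on (tube M tM) (\<lambda>y. Dp y h)"
  using someI_ex[OF diff_ex] unfolding Dp_def by blast

lemma Dp_lin: "y \<in> tube M tM \<Longrightarrow> linear (Dp y)"
  using Dp_deriv has_derivative_linear by blast

lemma Dp_blin: "y \<in> tube M tM \<Longrightarrow> bounded_linear (Dp y)"
  using Dp_deriv has_derivative_bounded_linear by blast

lemma chain:
  assumes y: "y \<in> tube M tM" and c: "(c has_vector_derivative c') (at 0)" and c0: "c 0 = y"
  shows "((\<lambda>t. closest_point M (c t)) has_derivative (\<lambda>t. t *\<^sub>R Dp y c')) (at 0)"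
proof -
  have "(c has_derivative (\<lambda>t. t *\<^sub>R c')) (at 0)" using c by (simp add: has_vector_derivative_def)
  from has_derivative_compose[OF this, of "closest_point M" "Dp y"]
  have "((\<lambda>t. closest_point M (c t)) has_derivative (\<lambda>t. Dp y (t *\<^sub>R c'))) (at 0)"
    using Dp_deriv[OF y] c0 by simp
  then show ?thesis
    by (rule has_derivative_eq_rhs) (simp add: fun_eq_iff linear_cmul[OF Dp_lin[OF y]])
qed

lemma chain_lim:
  assumes y: "y \<in> tube M tM" and c: "(c has_vector_derivative c') (at 0)" and c0: "c 0 = y"
  shows "((\<lambda>t. (closest_point M (c t) - closest_point M y) /\<^sub>R t) \<longlongrightarrow> Dp y c') (at_right 0)"
    and "((\<lambda>t. closest_point M (c t)) \<longlongrightarrow> closest_point M y) (at_right 0)"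
proof -
  show "((\<lambda>t. (closest_point M (c t) - closest_point M y) /\<^sub>R t) \<longlongrightarrow> Dp y c') (at_right 0)"
    using dq[OF chain[OF assms]] c0 by simp
  have "continuous (at 0) (\<lambda>t. closest_point M (c t))"
    using has_derivative_continuous[OF chain[OF assms]] .
  then have "((\<lambda>t. closest_point M (c t)) \<longlongrightarrow> closest_point M y) (at 0)"
    using c0 by (simp add: isCont_def)
  then show "((\<lambda>t. closest_point M (c t)) \<longlongrightarrow> closest_point M y) (at_right 0)"
    by (rule tendsto_within_subset) simp
qed

lemma ev_in_tube:
  assumes y: "y \<in> tube M tM" and c: "(c \<longlongrightarrow> y) (at_right 0)"
  shows "eventually (\<lambda>t. c t \<in> tube M tM) (at_right 0)"
  using topological_tendstoD[OF c open_tube y] .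

lemma range_TS:
  assumes y: "y \<in> tube M tM"
  shows "Dp y u \<in> tangent_space M (closest_point M y)"
proof -
  obtain e where e: "e > 0" "ball y e \<subseteq> tube M tM" using open_tube y open_contains_ball by blast
  define e' where "e' = e / (norm u + 1)"
  have npos: "norm u + 1 > 0" using norm_ge_zero[of u] by linarith
  then have e'pos: "e' > 0" using e unfolding e'_def by (simp add: divide_pos_pos)
  have inM: "closest_point M (y + t *\<^sub>R u) \<in> M" if "t \<in> {-e'<..<e'}" for t
  proof -
    have "\<bar>t\<bar> < e'" using that by auto
    then have "\<bar>t\<bar> * (norm u + 1) < e" unfolding e'_def
      using npos by (simp add: pos_less_divide_eq)
    moreover have "norm (t *\<^sub>R u) \<le> \<bar>t\<bar> * (norm u + 1)"
      by (simp add: mult_left_mono)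
    ultimately have "norm (t *\<^sub>R u) < e" by linarith
    then have "y + t *\<^sub>R u \<in> tube M tM" using e by (auto simp: dist_norm)
    then show ?thesis using tube_cp(1)[OF _ order_refl] by blast
  qed
  have "((\<lambda>t. y + t *\<^sub>R u) has_vector_derivative u) (at 0)" by (auto intro!: derivative_eq_intros)
  from chain[OF y this]
  have "((\<lambda>t. closest_point M (y + t *\<^sub>R u)) has_vector_derivative Dp y u) (at 0)"
    by (simp add: has_vector_derivative_def)
  then show ?thesis unfolding tangent_space_def
    by (intro CollectI exI[of _ "\<lambda>t. closest_point M (y + t *\<^sub>R u)"] exI[of _ e'] conjI)
      (use e'pos inM in auto)
qed

lemma TS_fix:
  assumes p: "p \<in> M" and w: "w \<in> tangent_space M p"
  shows "Dp p w = w"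
proof -
  obtain \<gamma> e where e: "e > 0" and g: "\<forall>t\<in>{-e<..<e}. \<gamma> t \<in> M" and g0: "\<gamma> 0 = p"
    and gd: "(\<gamma> has_vector_derivative w) (at 0)" using w unfolding tangent_space_def by blast
  have pt: "p \<in> tube M tM" using M_tube p tpos by auto
  have "((\<lambda>t. closest_point M (\<gamma> t)) has_vector_derivative Dp p w) (at 0)"
    using chain[OF pt gd g0] by (simp add: has_vector_derivative_def)
  moreover have "closest_point M (\<gamma> t) = \<gamma> t" if "t \<in> {-e<..<e}" for t
    using CP(1)[of "\<gamma> t" 0] g that tpos
    by (simp add: subspace_0[OF normal_space_subspace])
  ultimately have "(\<gamma> has_vector_derivative Dp p w) (at 0)"
    using has_vector_derivative_transform_within_open[of _ _ 0 "{-e<..<e}"] e by auto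
  then show ?thesis using gd vector_derivative_unique_at by blast
qed

lemma TS_range: "p \<in> M \<Longrightarrow> tangent_space M p = range (Dp p)"
proof
  assume p: "p \<in> M"
  show "tangent_space M p \<subseteq> range (Dp p)" using TS_fix[OF p] by (metis image_eqI subsetI UNIV_I)
  have pt: "p \<in> tube M tM" using M_tube p tpos by auto
  have "closest_point M p = p" using CP(1)[of p 0] p tpos by (simp add: subspace_0[OF normal_space_subspace])
  then show "range (Dp p) \<subseteq> tangent_space M p" using range_TS[OF pt] by auto
qed

lemma TS_subspace: "p \<in> M \<Longrightarrow> subspace (tangent_space M p)"
  using TS_range[of p] linear_subspace_image[OF Dp_lin subspace_UNIV] M_tube tpos by auto

end


lemma alg12:
  fixes b w v u :: "'a::real_inner"
  assumes t: "t > 0" and u: "u = v + t *\<^sub>R w - t *\<^sub>R b"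
    and H1: "2*T'*(u \<bullet> (- (t *\<^sub>R b))) \<le> nu * (norm (t *\<^sub>R b))^2"
    and H2: "2*T'*((-u) \<bullet> (- (t *\<^sub>R b))) \<le> nu * (norm (t *\<^sub>R b))^2"
    and H3: "2*T'*(v \<bullet> (t *\<^sub>R b)) \<le> r * (norm (t *\<^sub>R b))^2"
    and H4: "2*T'*((-v) \<bullet> (t *\<^sub>R b)) \<le> r * (norm (t *\<^sub>R b))^2"
  shows "2*T' * \<bar>(norm b)^2 - b \<bullet> w\<bar> \<le> (nu + r) * (norm b)^2"
proof -
  define B where "B = (norm b)^2"
  define WB where "WB = b \<bullet> w"
  define VB where "VB = v \<bullet> b"
  have nb: "(norm (t *\<^sub>R b))^2 = t^2 * B" by (simp add: B_def power_mult_distrib)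
  have eq1: "u \<bullet> (- (t *\<^sub>R b)) = - t * (VB + t * WB - t * B)"
    by (simp add: u VB_def WB_def B_def inner_diff_left inner_add_left inner_diff_right inner_add_right
        inner_commute power2_norm_eq_inner algebra_simps)
  have eq2: "(- u) \<bullet> (- (t *\<^sub>R b)) = t * (VB + t * WB - t * B)"
    by (simp add: u VB_def WB_def B_def inner_diff_left inner_add_left inner_diff_right inner_add_right
        inner_commute power2_norm_eq_inner algebra_simps)
  have h1: "2*T'*(- t * (VB + t * WB - t * B)) \<le> nu * (t^2 * B)" using H1 unfolding eq1 nb .
  have h2: "2*T'*(t * (VB + t * WB - t * B)) \<le> nu * (t^2 * B)" using H2 unfolding eq2 nb .
  have h3: "2*T'*(t * VB) \<le> r * (t^2 * B)" using H3 unfolding nb by (simp add: VB_def)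
  have h4: "2*T'*(- t * VB) \<le> r * (t^2 * B)" using H4 unfolding nb by (simp add: VB_def)
  have e1: "2*T'*(- t * (VB + t * WB - t * B)) + 2*T'*(t * VB) = t^2 * (2*T'*(B - WB))"
    by (simp add: algebra_simps power2_eq_square)
  have e2: "2*T'*(t * (VB + t * WB - t * B)) + 2*T'*(- t * VB) = t^2 * (2*T'*(WB - B))"
    by (simp add: algebra_simps power2_eq_square)
  have e3: "nu * (t^2 * B) + r * (t^2 * B) = t^2 * ((nu + r) * B)" by (simp add: algebra_simps)
  have t2: "t^2 > 0" using t by simp
  have "t^2 * (2*T'*(B - WB)) \<le> t^2 * ((nu + r) * B)" using h1 h3 e1 e3 by linarith
  then have a1: "2*T'*(B - WB) \<le> (nu + r) * B" using t2 by simp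
  have "t^2 * (2*T'*(WB - B)) \<le> t^2 * ((nu + r) * B)" using h2 h4 e2 e3 by linarith
  then have a2: "2*T'*(WB - B) \<le> (nu + r) * B" using t2 by simp
  show ?thesis
  proof (cases "B - WB \<ge> 0")
    case True then show ?thesis using a1 by (simp add: B_def WB_def)
  next
    case False
    then have "\<bar>B - WB\<bar> = WB - B" by simp
    then show ?thesis using a2 by (simp add: B_def WB_def)
  qed
qed

lemma alg3:
  fixes A D v u :: "'a::real_inner"
  assumes t: "t > 0" and u: "u = t *\<^sub>R A - t *\<^sub>R D + v"
    and H1: "2*T'*(u \<bullet> (t *\<^sub>R A - t *\<^sub>R D)) \<le> nu * (norm (t *\<^sub>R A - t *\<^sub>R D))^2"
    and H2: "2*T'*((-v) \<bullet> (t *\<^sub>R A)) \<le> r * (norm (t *\<^sub>R A))^2"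
    and H3: "2*T'*(v \<bullet> (t *\<^sub>R D)) \<le> r * (norm (t *\<^sub>R D))^2"
  shows "2*T' * (norm (A - D))^2 \<le> nu * (norm (A - D))^2 + r * (norm A)^2 + r * (norm D)^2"
proof -
  define X where "X = (norm (A - D))^2"
  define VA where "VA = v \<bullet> A"
  define VD where "VD = v \<bullet> D"
  have tAD: "t *\<^sub>R A - t *\<^sub>R D = t *\<^sub>R (A - D)" by (simp add: scaleR_diff_right)
  have nX: "(norm (t *\<^sub>R A - t *\<^sub>R D))^2 = t^2 * X" unfolding tAD by (simp add: X_def power_mult_distrib)
  have nA: "(norm (t *\<^sub>R A))^2 = t^2 * (norm A)^2" by (simp add: power_mult_distrib)
  have nD: "(norm (t *\<^sub>R D))^2 = t^2 * (norm D)^2" by (simp add: power_mult_distrib)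
  have u2: "u = t *\<^sub>R (A - D) + v" using u tAD by simp
  have "u \<bullet> (t *\<^sub>R (A - D)) = t^2 * ((A - D) \<bullet> (A - D)) + t * (v \<bullet> (A - D))"
    unfolding u2 by (simp add: inner_add_left power2_eq_square algebra_simps)
  then have uX: "u \<bullet> (t *\<^sub>R A - t *\<^sub>R D) = t^2 * X + t * (VA - VD)"
    unfolding tAD X_def VA_def VD_def by (simp add: power2_norm_eq_inner inner_diff_right)
  have h1: "2*T'*(t^2 * X + t * (VA - VD)) \<le> nu * (t^2 * X)" using H1 by (simp add: nX uX)
  have h2: "2*T'*(- (t * VA)) \<le> r * (t^2 * (norm A)^2)" using H2 unfolding nA by (simp add: VA_def)
  have h3: "2*T'*(t * VD) \<le> r * (t^2 * (norm D)^2)" using H3 unfolding nD by (simp add: VD_def)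
  have e1: "2*T'*(t^2 * X + t * (VA - VD)) + 2*T'*(- (t * VA)) + 2*T'*(t * VD) = t^2 * (2*T'*X)"
    by (simp add: algebra_simps)
  have e2: "nu * (t^2 * X) + r * (t^2 * (norm A)^2) + r * (t^2 * (norm D)^2)
      = t^2 * (nu * X + r * (norm A)^2 + r * (norm D)^2)" by (simp add: algebra_simps)
  have "t^2 * (2*T'*X) \<le> t^2 * (nu * X + r * (norm A)^2 + r * (norm D)^2)"
    using h1 h2 h3 e1 e2 by linarith
  then show ?thesis using t by (simp add: X_def)
qed

context rset begin

lemma C12:
  assumes x: "x \<in> tube M tM" and T: "0 < T'" "T' < tM"
  shows "T' * \<bar>(norm (Dp x w))^2 - Dp x w \<bullet> w\<bar> \<le> norm (x - closest_point M x) * (norm (Dp x w))^2"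
proof -
  define p where "p = closest_point M x"
  define v where "v = x - p"
  define r where "r = norm v"
  have p: "p \<in> M" "v \<in> normal_space M p"
    using tube_cp[OF x order_refl] unfolding p_def v_def by auto
  define y where "y = (\<lambda>t::real. x + t *\<^sub>R w)"
  define q where "q = (\<lambda>t. closest_point M (y t))"
  define b where "b = (\<lambda>t. (q t - p) /\<^sub>R t)"
  define u where "u = (\<lambda>t. y t - q t)"
  have yd: "(y has_vector_derivative w) (at 0)" unfolding y_def by (auto intro!: derivative_eq_intros)
  have y0: "y 0 = x" unfolding y_def by simp
  have lim_b: "(b \<longlongrightarrow> Dp x w) (at_right 0)"
    using chain_lim(1)[OF x yd y0] unfolding b_def q_def p_def .
  have lim_q: "(q \<longlongrightarrow> p) (at_right 0)"
    using chain_lim(2)[OF x yd y0] unfolding q_def p_def .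
  have lim_y: "(y \<longlongrightarrow> x) (at_right 0)" unfolding y_def
    by (auto intro!: tendsto_eq_intros)
  have lim_u: "((\<lambda>t. norm (u t)) \<longlongrightarrow> r) (at_right 0)"
    unfolding u_def r_def v_def by (intro tendsto_intros lim_y lim_q)
  have ev: "eventually (\<lambda>t. y t \<in> tube M tM \<and> t > 0) (at_right 0)"
    using ev_in_tube[OF x lim_y] eventually_at_right_less[of "0::real"] by (auto elim: eventually_elim2)
  have key: "2*T' * \<bar>(norm (b t))^2 - b t \<bullet> w\<bar> \<le> (norm (u t) + r) * (norm (b t))^2"
    if yt: "y t \<in> tube M tM" and t: "t > 0" for t
  proof -
    have qt: "q t \<in> M" "u t \<in> normal_space M (q t)"
      using tube_cp[OF yt order_refl] unfolding q_def u_def by auto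
    have qb: "q t = p + t *\<^sub>R b t" using t unfolding b_def by simp
    have uu: "u t = v + t *\<^sub>R w - t *\<^sub>R b t" unfolding u_def y_def v_def qb by simp
    have pq: "p - q t = - (t *\<^sub>R b t)" "q t - p = t *\<^sub>R b t" using qb by simp_all
    have sub: "subspace (normal_space M (q t))" "subspace (normal_space M p)"
      using normal_space_subspace by auto
    have H1: "2*T'*(u t \<bullet> (- (t *\<^sub>R b t))) \<le> norm (u t) * (norm (t *\<^sub>R b t))^2"
      using Federer[OF qt(1) qt(2) p(1) T] unfolding pq by simp
    have H2: "2*T'*((- u t) \<bullet> (- (t *\<^sub>R b t))) \<le> norm (u t) * (norm (t *\<^sub>R b t))^2"
      using Federer[OF qt(1) subspace_neg[OF sub(1) qt(2)] p(1) T] unfolding pq by simp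
    have H3: "2*T'*(v \<bullet> (t *\<^sub>R b t)) \<le> r * (norm (t *\<^sub>R b t))^2"
      using Federer[OF p(1) p(2) qt(1) T] unfolding pq r_def by simp
    have H4: "2*T'*((-v) \<bullet> (t *\<^sub>R b t)) \<le> r * (norm (t *\<^sub>R b t))^2"
      using Federer[OF p(1) subspace_neg[OF sub(2) p(2)] qt(1) T] unfolding pq r_def by simp
    show ?thesis by (rule alg12[OF t uu H1 H2 H3 H4])
  qed
  have "2*T' * \<bar>(norm (Dp x w))^2 - Dp x w \<bullet> w\<bar> \<le> (r + r) * (norm (Dp x w))^2"
  proof (rule tendsto_le[OF trivial_limit_at_right_real])
    show "((\<lambda>t. (norm (u t) + r) * (norm (b t))^2) \<longlongrightarrow> (r + r) * (norm (Dp x w))^2) (at_right 0)"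
      by (intro tendsto_intros lim_u lim_b)
    show "((\<lambda>t. 2*T' * \<bar>(norm (b t))^2 - b t \<bullet> w\<bar>) \<longlongrightarrow> 2*T' * \<bar>(norm (Dp x w))^2 - Dp x w \<bullet> w\<bar>) (at_right 0)"
      by (intro tendsto_intros lim_b)
    show "\<forall>\<^sub>F t in at_right 0. 2*T' * \<bar>(norm (b t))^2 - b t \<bullet> w\<bar> \<le> (norm (u t) + r) * (norm (b t))^2"
      using ev by (rule eventually_mono) (use key in auto)
  qed
  then show ?thesis unfolding r_def v_def p_def by simp
qed

lemma C3:
  assumes x: "x \<in> tube M tM" and T: "0 < T'" "T' < tM" and rT: "norm (x - closest_point M x) < T'"
    and w: "w \<in> tangent_space M (closest_point M x)" and B0: "Dp x w = 0"
  shows "w = 0"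
proof -
  define p where "p = closest_point M x"
  define v where "v = x - p"
  define r where "r = norm v"
  have p: "p \<in> M" "v \<in> normal_space M p"
    using tube_cp[OF x order_refl] unfolding p_def v_def by auto
  have pt: "p \<in> tube M tM" using M_tube p tpos by auto
  have cpp: "closest_point M p = p" using CP(1)[of p 0] p tpos by (simp add: subspace_0[OF normal_space_subspace])
  have wfix: "Dp p w = w" using TS_fix[OF p(1)] w unfolding p_def by simp
  define l where "l = (\<lambda>t::real. p + t *\<^sub>R w)"
  have ld: "(l has_vector_derivative w) (at 0)" unfolding l_def by (auto intro!: derivative_eq_intros)
  have l0: "l 0 = p" unfolding l_def by simp
  define \<gamma> where "\<gamma> = (\<lambda>t. closest_point M (l t))"
  have gd: "(\<gamma> has_vector_derivative w) (at 0)"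
    using chain[OF pt ld l0] wfix unfolding \<gamma>_def by (simp add: has_vector_derivative_def)
  have g0: "\<gamma> 0 = p" unfolding \<gamma>_def l0 cpp ..
  define c where "c = (\<lambda>t. \<gamma> t + v)"
  have cd: "(c has_vector_derivative w) (at 0)" unfolding c_def using gd by (auto intro!: derivative_eq_intros)
  have c0: "c 0 = x" unfolding c_def g0 v_def by simp
  define q where "q = (\<lambda>t. closest_point M (c t))"
  define a' where "a' = (\<lambda>t. (\<gamma> t - p) /\<^sub>R t)"
  define d' where "d' = (\<lambda>t. (q t - p) /\<^sub>R t)"
  define u where "u = (\<lambda>t. c t - q t)"
  have lim_a: "(a' \<longlongrightarrow> w) (at_right 0)"
    using chain_lim(1)[OF pt ld l0] wfix cpp unfolding a'_def \<gamma>_def by simp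
  have lim_d: "(d' \<longlongrightarrow> 0) (at_right 0)"
    using chain_lim(1)[OF x cd c0] B0 unfolding d'_def q_def p_def by simp
  have lim_q: "(q \<longlongrightarrow> p) (at_right 0)"
    using chain_lim(2)[OF x cd c0] unfolding q_def p_def .
  have lim_c: "(c \<longlongrightarrow> x) (at_right 0)"
  proof -
    have "isCont c 0" using has_vector_derivative_continuous[OF cd] .
    then have "(c \<longlongrightarrow> x) (at 0)" using c0 by (simp add: isCont_def)
    then show ?thesis by (rule tendsto_within_subset) simp
  qed
  have lim_l: "(l \<longlongrightarrow> p) (at_right 0)" unfolding l_def by (auto intro!: tendsto_eq_intros)
  have lim_u: "((\<lambda>t. norm (u t)) \<longlongrightarrow> r) (at_right 0)"
    unfolding u_def r_def v_def by (intro tendsto_intros lim_c lim_q)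
  have ev: "eventually (\<lambda>t. c t \<in> tube M tM \<and> l t \<in> tube M tM \<and> t > 0) (at_right 0)"
    using eventually_conj[OF ev_in_tube[OF x lim_c] eventually_conj[OF ev_in_tube[OF pt lim_l]
      eventually_at_right_less[of "0::real"]]] .
  have key: "2*T' * (norm (a' t - d' t))^2 \<le> norm (u t) * (norm (a' t - d' t))^2 + r * (norm (a' t))^2 + r * (norm (d' t))^2"
    if ct: "c t \<in> tube M tM" and lt: "l t \<in> tube M tM" and t: "t > 0" for t
  proof -
    have qt: "q t \<in> M" "u t \<in> normal_space M (q t)"
      using tube_cp[OF ct order_refl] unfolding q_def u_def by auto
    have gt: "\<gamma> t \<in> M" using tube_cp(1)[OF lt order_refl] unfolding \<gamma>_def .
    have ga: "\<gamma> t = p + t *\<^sub>R a' t" using t unfolding a'_def by simp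
    have qd: "q t = p + t *\<^sub>R d' t" using t unfolding d'_def by simp
    have uu: "u t = t *\<^sub>R a' t - t *\<^sub>R d' t + v" unfolding u_def c_def ga qd by simp
    have sub: "subspace (normal_space M p)" using normal_space_subspace by auto
    have H1: "2*T'*(u t \<bullet> (t *\<^sub>R a' t - t *\<^sub>R d' t)) \<le> norm (u t) * (norm (t *\<^sub>R a' t - t *\<^sub>R d' t))^2"
    proof -
      have "\<gamma> t - q t = t *\<^sub>R a' t - t *\<^sub>R d' t" using ga qd by simp
      then show ?thesis using Federer[OF qt(1) qt(2) gt T] by simp
    qed
    have H2: "2*T'*((-v) \<bullet> (t *\<^sub>R a' t)) \<le> r * (norm (t *\<^sub>R a' t))^2"
    proof -
      have "\<gamma> t - p = t *\<^sub>R a' t" using ga by simp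
      then show ?thesis using Federer[OF p(1) subspace_neg[OF sub p(2)] gt T] unfolding r_def by simp
    qed
    have H3: "2*T'*(v \<bullet> (t *\<^sub>R d' t)) \<le> r * (norm (t *\<^sub>R d' t))^2"
    proof -
      have "q t - p = t *\<^sub>R d' t" using qd by simp
      then show ?thesis using Federer[OF p(1) p(2) qt(1) T] unfolding r_def by simp
    qed
    show ?thesis by (rule alg3[OF t uu H1 H2 H3])
  qed
  have "2*T' * (norm (w - 0))^2 \<le> r * (norm (w - 0))^2 + r * (norm w)^2 + r * (norm (0::'a))^2"
  proof (rule tendsto_le[OF trivial_limit_at_right_real])
    show "((\<lambda>t. norm (u t) * (norm (a' t - d' t))^2 + r * (norm (a' t))^2 + r * (norm (d' t))^2)
        \<longlongrightarrow> r * (norm (w - 0))^2 + r * (norm w)^2 + r * (norm (0::'a))^2) (at_right 0)"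
      by (intro tendsto_intros lim_u lim_a lim_d)
    show "((\<lambda>t. 2*T' * (norm (a' t - d' t))^2) \<longlongrightarrow> 2*T' * (norm (w - 0))^2) (at_right 0)"
      by (intro tendsto_intros lim_a lim_d)
    show "\<forall>\<^sub>F t in at_right 0. 2*T' * (norm (a' t - d' t))^2 \<le>
        norm (u t) * (norm (a' t - d' t))^2 + r * (norm (a' t))^2 + r * (norm (d' t))^2"
      using ev by (rule eventually_mono) (use key in auto)
  qed
  then have "2 * (T' - r) * (norm w)^2 \<le> 0" by (simp add: algebra_simps)
  moreover have "T' - r > 0" using rT unfolding r_def v_def p_def by simp
  ultimately have "(norm w)^2 \<le> 0" by (simp add: mult_le_0_iff)
  then show "w = 0" by simp
qed

end


lemma orth_proj_props:
  fixes T :: "'a::euclidean_space set"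
  assumes T: "subspace T"
  shows "orth_proj T g \<in> T" "\<And>w. w \<in> T \<Longrightarrow> (g - orth_proj T g) \<bullet> w = 0"
proof -
  obtain y z where y: "y \<in> span T" and z: "\<And>w. w \<in> span T \<Longrightarrow> orthogonal z w" and g: "g = y + z"
    using orthogonal_subspace_decomp_exists[of T g] by blast
  have sT: "span T = T" using T by simp
  have ex: "y \<in> T \<and> (\<forall>w\<in>T. (g - y) \<bullet> w = 0)" using y z g sT by (auto simp: orthogonal_def)
  have un: "t = y" if "t \<in> T \<and> (\<forall>w\<in>T. (g - t) \<bullet> w = 0)" for t
  proof -
    have "t - y \<in> T" using that ex T subspace_diff by blast
    then have "(g - y) \<bullet> (t - y) = 0" "(g - t) \<bullet> (t - y) = 0" using that ex by auto
    then have "(t - y) \<bullet> (t - y) = 0" by (simp add: inner_diff_left inner_diff_right inner_commute)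
    then show ?thesis by simp
  qed
  have "orth_proj T g = y" unfolding orth_proj_def by (rule the_equality) (use ex un in blast)+
  then show "orth_proj T g \<in> T" "\<And>w. w \<in> T \<Longrightarrow> (g - orth_proj T g) \<bullet> w = 0" using ex by auto
qed

lemma linalg:
  fixes B :: "'a::euclidean_space \<Rightarrow> 'a" and T :: "'a set"
  assumes T: "subspace T" and lin: "linear B" and sym: "\<And>u w. B u \<bullet> w = u \<bullet> B w"
    and BT: "\<And>t. t \<in> T \<Longrightarrow> B t \<in> T"
    and a: "\<And>t. t \<in> T \<Longrightarrow> \<bar>(norm (B t))^2 - B t \<bullet> t\<bar> \<le> \<rho> * (norm (B t))^2"
    and c: "\<And>t. t \<in> T \<Longrightarrow> B t = 0 \<Longrightarrow> t = 0"
    and \<rho>: "0 \<le> \<rho>" "\<rho> < 1"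
    and t: "t \<in> T"
  shows "norm (B t - t) \<le> \<rho> / (1 - \<rho>) * norm t"
proof -
  define K where "K = \<rho> / (1 - \<rho>)"
  have K0: "K \<ge> 0" using \<rho> by (simp add: K_def)
  have a1: "(1 - \<rho>) * (norm (B t))^2 \<le> B t \<bullet> t" if "t \<in> T" for t
    using a[OF that] by (simp add: abs_le_iff algebra_simps)
  have a2: "B t \<bullet> t \<le> (1 + \<rho>) * (norm (B t))^2" if "t \<in> T" for t
    using a[OF that] by (simp add: abs_le_iff algebra_simps)
  have up: "B t \<bullet> t \<le> (norm t)^2 / (1 - \<rho>)" if tT: "t \<in> T" for t
  proof -
    have cs: "B t \<bullet> t \<le> norm (B t) * norm t" using Cauchy_Schwarz_ineq2[of "B t" t] by linarith
    have "(1 - \<rho>) * norm (B t) \<le> norm t"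
    proof (cases "B t = 0")
      case True then show ?thesis by simp
    next
      case False
      then have nb: "norm (B t) > 0" by simp
      have "norm (B t) * ((1 - \<rho>) * norm (B t)) \<le> norm (B t) * norm t"
        using a1[OF tT] cs by (simp add: power2_eq_square algebra_simps)
      then show ?thesis using nb by simp
    qed
    then have "norm (B t) \<le> norm t / (1 - \<rho>)" using \<rho> by (simp add: pos_le_divide_eq mult.commute)
    then have "norm (B t) * norm t \<le> norm t / (1 - \<rho>) * norm t" by (rule mult_right_mono) simp
    then show ?thesis using cs by (simp add: power2_eq_square)
  qed
  have low: "(norm t)^2 / (1 + \<rho>) \<le> B t \<bullet> t" if tT: "t \<in> T" for t
  proof (cases "T \<subseteq> {0}")
    case True then have "t = 0" using tT by auto
    then show ?thesis by simp
  next
    case False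
    then obtain t0 where t0: "t0 \<in> T" "t0 \<noteq> 0" by auto
    define S where "S = T \<inter> sphere 0 1"
    have Sne: "S \<noteq> {}" using t0 T unfolding S_def
      by (intro notI) (metis (no_types) Int_iff empty_iff mem_sphere_0 norm_sgn sgn_zero_iff subspace_scale scaleR_one sgn_div_norm divide_inverse_commute scale_eq_0_iff t0(2))
    have Sc: "compact S" unfolding S_def
      using compact_Int_closed[OF compact_sphere closed_subspace[OF T], of 0 1] by (simp add: Int_commute)
    have fc: "continuous_on S (\<lambda>t. B t \<bullet> t)"
      using lin by (intro continuous_intros linear_continuous_on) (simp add: linear_conv_bounded_linear[symmetric])
    obtain w0 where w0: "w0 \<in> S" "\<And>t. t \<in> S \<Longrightarrow> B w0 \<bullet> w0 \<le> B t \<bullet> t"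
      using continuous_attains_inf[OF Sc Sne fc] by blast
    define m where "m = B w0 \<bullet> w0"
    have w0T: "w0 \<in> T" and nw0: "norm w0 = 1" using w0(1) unfolding S_def by auto
    have mall: "m * (norm t)^2 \<le> B t \<bullet> t" if "t \<in> T" for t
    proof (cases "t = 0")
      case True then show ?thesis by (simp add: linear_0[OF lin])
    next
      case False
      define t' where "t' = (1 / norm t) *\<^sub>R t"
      have "t' \<in> S" unfolding S_def t'_def using that False T by (auto simp: subspace_scale)
      then have "m \<le> B t' \<bullet> t'" using w0(2) unfolding m_def by blast
      also have "B t' \<bullet> t' = (B t \<bullet> t) / (norm t)^2"
        unfolding t'_def by (simp add: linear_cmul[OF lin] power2_eq_square)
      finally show ?thesis using False by (simp add: pos_le_divide_eq)
    qed
    define e where "e = B w0 - m *\<^sub>R w0"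
    have eT: "e \<in> T" unfolding e_def using BT[OF w0T] w0T T by (simp add: subspace_diff subspace_scale)
    have ew0: "e \<bullet> w0 = 0" unfolding e_def m_def using nw0
      by (simp add: inner_diff_left power2_norm_eq_inner[symmetric])
    define Q where "Q = (\<lambda>z. (B z - m *\<^sub>R z) \<bullet> z)"
    have Qpos: "Q z \<ge> 0" if "z \<in> T" for z
      using mall[OF that] by (simp add: Q_def inner_diff_left power2_norm_eq_inner)
    have Qs: "Q (w0 + s *\<^sub>R e) = 2 * s * (e \<bullet> e) + s^2 * Q e" for s
    proof -
      have l1: "B (w0 + s *\<^sub>R e) = B w0 + s *\<^sub>R B e" by (simp add: linear_add[OF lin] linear_cmul[OF lin])
      have l2: "B w0 = e + m *\<^sub>R w0" unfolding e_def by simp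
      have "B (w0 + s *\<^sub>R e) - m *\<^sub>R (w0 + s *\<^sub>R e) = e + s *\<^sub>R (B e - m *\<^sub>R e)"
        unfolding l1 l2 by (simp add: algebra_simps)
      moreover have "(B e - m *\<^sub>R e) \<bullet> w0 = e \<bullet> e"
      proof -
        have "(B e - m *\<^sub>R e) \<bullet> w0 = e \<bullet> B w0 - m * (e \<bullet> w0)" by (simp add: inner_diff_left sym)
        also have "\<dots> = e \<bullet> (e + m *\<^sub>R w0)" using ew0 unfolding e_def by simp
        also have "\<dots> = e \<bullet> e" using ew0 by (simp add: inner_add_right)
        finally show ?thesis .
      qed
      ultimately show ?thesis unfolding Q_def using ew0
        by (simp add: inner_add_left inner_add_right inner_commute power2_eq_square algebra_simps)
    qed
    have "e = 0"
    proof (rule ccontr)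
      assume "e \<noteq> 0"
      define E where "E = e \<bullet> e"
      define Kq where "Kq = Q e"
      have E0: "E > 0" using \<open>e \<noteq> 0\<close> by (simp add: E_def)
      have K0': "Kq \<ge> 0" using Qpos[OF eT] by (simp add: Kq_def)
      define s where "s = - E / (Kq + 1)"
      have "w0 + s *\<^sub>R e \<in> T" using w0T eT T by (simp add: subspace_add subspace_scale)
      then have "0 \<le> 2 * s * E + s^2 * Kq" using Qpos Qs unfolding E_def Kq_def by metis
      then have "0 \<le> (Kq + 1)^2 * (2 * s * E + s^2 * Kq)" by simp
      also have "(Kq + 1)^2 * (2 * s * E + s^2 * Kq) = - (E^2 * (Kq + 2))"
      proof -
        have sk: "s * (Kq + 1) = - E" unfolding s_def using K0' by simp
        have "(Kq + 1)^2 * (2 * s * E + s^2 * Kq) = 2 * E * (Kq + 1) * (s * (Kq + 1)) + (s * (Kq + 1))^2 * Kq"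
          by (simp add: power2_eq_square algebra_simps)
        also have "\<dots> = - (E^2 * (Kq + 2))" unfolding sk by (simp add: power2_eq_square algebra_simps)
        finally show ?thesis .
      qed
      finally have "E^2 * (Kq + 2) \<le> 0" by simp
      moreover have "E^2 * (Kq + 2) > 0" using E0 K0' by simp
      ultimately show False by simp
    qed
    then have Bw0: "B w0 = m *\<^sub>R w0" unfolding e_def by simp
    have ww: "w0 \<bullet> w0 = 1" using nw0 by (metis power2_norm_eq_inner power_one)
    have "m \<noteq> 0"
    proof
      assume "m = 0"
      then have "B w0 = 0" using Bw0 by simp
      then have "w0 = 0" using c[OF w0T] by simp
      then show False using nw0 by simp
    qed
    moreover have "(1 - \<rho>) * m^2 \<le> m" using a1[OF w0T] Bw0 nw0 ww by (simp add: m_def[symmetric])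
    ultimately have mpos: "m > 0" using \<rho> by (smt (verit) mult_nonneg_nonneg zero_le_power2)
    have "m \<le> (1 + \<rho>) * m^2" using a2[OF w0T] Bw0 nw0 ww by (simp add: m_def[symmetric])
    then have "1 \<le> (1 + \<rho>) * m" using mpos by (simp add: power2_eq_square)
    then have "1 / (1 + \<rho>) \<le> m" using \<rho> by (simp add: divide_le_eq mult.commute)
    then have "(norm t)^2 / (1 + \<rho>) \<le> m * (norm t)^2"
      by (metis divide_inverse_commute mult.commute mult_right_mono zero_le_power2 mult_1 divide_inverse)
    then show ?thesis using mall[OF tT] by linarith
  qed
  define S where "S = (\<lambda>y. B y - y)"
  have Ssym: "S y \<bullet> z = y \<bullet> S z" for y z unfolding S_def by (simp add: inner_diff_left inner_diff_right sym)
  have Slin: "S (y + z) = S y + S z" "S (y - z) = S y - S z" "S (k *\<^sub>R y) = k *\<^sub>R S y" for y z k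
    unfolding S_def by (simp_all add: linear_add[OF lin] linear_diff[OF lin] linear_cmul[OF lin] algebra_simps)
  have Qb: "\<bar>S y \<bullet> y\<bar> \<le> K * (norm y)^2" if yT: "y \<in> T" for y
  proof -
    have "S y \<bullet> y = B y \<bullet> y - (norm y)^2" unfolding S_def by (simp add: inner_diff_left power2_norm_eq_inner)
    moreover have "(norm y)^2 / (1 - \<rho>) - (norm y)^2 = K * (norm y)^2"
      using \<rho> unfolding K_def by (simp add: field_simps)
    moreover have "(norm y)^2 - (norm y)^2 / (1 + \<rho>) \<le> K * (norm y)^2"
    proof -
      have "(norm y)^2 - (norm y)^2 / (1 + \<rho>) = \<rho> / (1 + \<rho>) * (norm y)^2" using \<rho> by (simp add: field_simps)
      moreover have "\<rho> / (1 + \<rho>) \<le> K" unfolding K_def using \<rho> by (simp add: frac_le)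
      moreover have "\<rho> / (1 + \<rho>) * (norm y)^2 \<le> K * (norm y)^2"
        by (rule mult_right_mono[OF \<open>\<rho> / (1 + \<rho>) \<le> K\<close>]) simp
      ultimately show ?thesis by linarith
    qed
    ultimately show ?thesis using up[OF yT] low[OF yT] by (simp add: abs_le_iff)
  qed
  show ?thesis
  proof (cases "S t = 0")
    case True
    then have "B t - t = 0" unfolding S_def .
    then show ?thesis using K0 by (simp add: K_def[symmetric])
  next
    case False
    define z where "z = (norm t / norm (S t)) *\<^sub>R S t"
    have tne: "t \<noteq> 0" using False unfolding S_def by (auto simp: linear_0[OF lin])
    have ST: "S t \<in> T" unfolding S_def using BT[OF t] t T by (simp add: subspace_diff)
    have zT: "z \<in> T" unfolding z_def using ST T by (simp add: subspace_scale)
    have nz: "norm z = norm t" unfolding z_def using False by simp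
    have nzz: "z \<bullet> z = t \<bullet> t" using nz by (metis power2_norm_eq_inner)
    have Stz: "S t \<bullet> z = norm t * norm (S t)" unfolding z_def using False
      by (simp add: power2_norm_eq_inner[symmetric] power2_eq_square)
    have sw: "S z \<bullet> t = S t \<bullet> z" using Ssym[of z t] by (simp add: inner_commute)
    have pol: "S (t + z) \<bullet> (t + z) - S (t - z) \<bullet> (t - z) = 4 * (S t \<bullet> z)"
      using sw by (simp add: Slin inner_add_left inner_add_right inner_diff_left inner_diff_right)
    have tzT: "t + z \<in> T" "t - z \<in> T" using zT t T by (simp_all add: subspace_add subspace_diff)
    have q1: "S (t + z) \<bullet> (t + z) \<le> K * (norm (t + z))^2" using Qb[OF tzT(1)] by (meson abs_le_iff)
    have q2: "- (S (t - z) \<bullet> (t - z)) \<le> K * (norm (t - z))^2" using Qb[OF tzT(2)] by (meson abs_le_iff)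
    have hs: "(norm (t + z))^2 + (norm (t - z))^2 = 4 * (norm t)^2"
      using nzz by (simp add: power2_norm_eq_inner inner_add_left inner_add_right inner_diff_left inner_diff_right inner_commute power2_eq_square[symmetric])
    have hk: "K * (norm (t + z))^2 + K * (norm (t - z))^2 = K * (4 * (norm t)^2)"
      by (simp only: distrib_left[symmetric] hs)
    have "4 * (norm t * norm (S t)) \<le> K * (4 * (norm t)^2)" using q1 q2 hk pol Stz by linarith
    then have "norm t * norm (S t) \<le> norm t * (K * norm t)" by (simp add: power2_eq_square algebra_simps)
    then have "norm (S t) \<le> K * norm t" using tne by simp
    then show ?thesis unfolding S_def K_def .
  qed
qed


lemma line_deriv:
  assumes "(f has_derivative f') (at (a + t *\<^sub>R u))"
  shows "((\<lambda>s. f (a + s *\<^sub>R u)) has_derivative (\<lambda>h. f' (h *\<^sub>R u))) (at t)"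
proof -
  have "((\<lambda>s. a + s *\<^sub>R u) has_derivative (\<lambda>h. h *\<^sub>R u)) (at t)" by (auto intro!: derivative_eq_intros)
  from has_derivative_compose[OF this assms] show ?thesis by simp
qed

lemma mixed:
  fixes \<phi> :: "'a::real_inner \<Rightarrow> real" and F :: "'a \<Rightarrow> 'a" and DF :: "'a \<Rightarrow> 'a \<Rightarrow> 'a"
  assumes d\<phi>: "\<And>y. y \<in> U \<Longrightarrow> (\<phi> has_derivative (\<lambda>h. F y \<bullet> h)) (at y)"
    and dF: "\<And>y. y \<in> U \<Longrightarrow> (F has_derivative DF y) (at y)"
    and s: "s > 0" and sub: "cball x (s * (norm u + norm w)) \<subseteq> U"
  shows "\<exists>\<xi>. dist \<xi> x \<le> s * (norm u + norm w) \<and>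
     \<phi> (x + s *\<^sub>R u + s *\<^sub>R w) - \<phi> (x + s *\<^sub>R u) - \<phi> (x + s *\<^sub>R w) + \<phi> x = s^2 * (DF \<xi> w \<bullet> u)"
proof -
  have nb: "norm (\<alpha> *\<^sub>R u + \<beta> *\<^sub>R w) \<le> s * (norm u + norm w)"
    if "0 \<le> \<alpha>" "\<alpha> \<le> s" "0 \<le> \<beta>" "\<beta> \<le> s" for \<alpha> \<beta>
  proof -
    have "norm (\<alpha> *\<^sub>R u + \<beta> *\<^sub>R w) \<le> norm (\<alpha> *\<^sub>R u) + norm (\<beta> *\<^sub>R w)" by (rule norm_triangle_ineq)
    also have "\<dots> = \<alpha> * norm u + \<beta> * norm w" using that by simp
    also have "\<dots> \<le> s * norm u + s * norm w" using that by (intro add_mono mult_right_mono) auto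
    finally show ?thesis by (simp add: distrib_left)
  qed
  have inU: "x + \<alpha> *\<^sub>R u + \<beta> *\<^sub>R w \<in> U" if "0 \<le> \<alpha>" "\<alpha> \<le> s" "0 \<le> \<beta>" "\<beta> \<le> s" for \<alpha> \<beta>
  proof -
    have "dist x (x + \<alpha> *\<^sub>R u + \<beta> *\<^sub>R w) \<le> s * (norm u + norm w)"
    proof -
      have "dist x (x + \<alpha> *\<^sub>R u + \<beta> *\<^sub>R w) = norm (\<alpha> *\<^sub>R u + \<beta> *\<^sub>R w)"
        by (metis dist_commute dist_norm add.assoc add_diff_cancel_left')
      then show ?thesis using nb[OF that] by simp
    qed
    then show ?thesis using sub by auto
  qed
  define k where "k = (\<lambda>\<alpha>. \<phi> ((x + s *\<^sub>R w) + \<alpha> *\<^sub>R u) - \<phi> (x + \<alpha> *\<^sub>R u))"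
  define k' where "k' = (\<lambda>\<alpha>. (F (x + \<alpha> *\<^sub>R u + s *\<^sub>R w) - F (x + \<alpha> *\<^sub>R u)) \<bullet> u)"
  have kd: "DERIV k \<alpha> :> k' \<alpha>" if "0 \<le> \<alpha>" "\<alpha> \<le> s" for \<alpha>
  proof -
    have e1: "(x + s *\<^sub>R w) + \<alpha> *\<^sub>R u = x + \<alpha> *\<^sub>R u + s *\<^sub>R w" by (simp add: algebra_simps)
    have p1: "x + \<alpha> *\<^sub>R u + s *\<^sub>R w \<in> U" using inU[of \<alpha> s] that s by simp
    have p2: "x + \<alpha> *\<^sub>R u \<in> U" using inU[of \<alpha> 0] that s by simp
    have d1: "((\<lambda>a. \<phi> ((x + s *\<^sub>R w) + a *\<^sub>R u)) has_derivative
        (\<lambda>h. F (x + \<alpha> *\<^sub>R u + s *\<^sub>R w) \<bullet> (h *\<^sub>R u))) (at \<alpha>)"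
      by (rule line_deriv) (unfold e1, rule d\<phi>[OF p1])
    have d2: "((\<lambda>a. \<phi> (x + a *\<^sub>R u)) has_derivative (\<lambda>h. F (x + \<alpha> *\<^sub>R u) \<bullet> (h *\<^sub>R u))) (at \<alpha>)"
      by (rule line_deriv) (rule d\<phi>[OF p2])
    show ?thesis unfolding k_def k'_def
      by (rule has_derivative_imp_has_field_derivative[OF has_derivative_diff[OF d1 d2]])
        (simp add: inner_diff_left algebra_simps)
  qed
  obtain \<alpha>1 where a1: "0 < \<alpha>1" "\<alpha>1 < s" "k s - k 0 = (s - 0) * k' \<alpha>1"
    using MVT2[OF s, of k k'] kd by auto
  define m where "m = (\<lambda>\<beta>. F ((x + \<alpha>1 *\<^sub>R u) + \<beta> *\<^sub>R w) \<bullet> u)"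
  define m' where "m' = (\<lambda>\<beta>. DF (x + \<alpha>1 *\<^sub>R u + \<beta> *\<^sub>R w) w \<bullet> u)"
  have md: "DERIV m \<beta> :> m' \<beta>" if "0 \<le> \<beta>" "\<beta> \<le> s" for \<beta>
  proof -
    have p: "x + \<alpha>1 *\<^sub>R u + \<beta> *\<^sub>R w \<in> U" using inU[of \<alpha>1 \<beta>] that a1 by simp
    have d: "((\<lambda>b. F ((x + \<alpha>1 *\<^sub>R u) + b *\<^sub>R w)) has_derivative
        (\<lambda>h. DF (x + \<alpha>1 *\<^sub>R u + \<beta> *\<^sub>R w) (h *\<^sub>R w))) (at \<beta>)"
      by (rule line_deriv) (rule dF[OF p])
    have lin: "linear (DF (x + \<alpha>1 *\<^sub>R u + \<beta> *\<^sub>R w))" using dF[OF p] has_derivative_linear by blast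
    show ?thesis unfolding m_def m'_def
      by (rule has_derivative_imp_has_field_derivative[OF bounded_linear.has_derivative[OF bounded_linear_inner_left d]])
        (simp add: linear_cmul[OF lin])
  qed
  obtain \<beta>1 where b1: "0 < \<beta>1" "\<beta>1 < s" "m s - m 0 = (s - 0) * m' \<beta>1"
    using MVT2[OF s, of m m'] md by auto
  define \<xi> where "\<xi> = x + \<alpha>1 *\<^sub>R u + \<beta>1 *\<^sub>R w"
  have "dist \<xi> x \<le> s * (norm u + norm w)"
    using nb[of \<alpha>1 \<beta>1] a1 b1 by (simp add: \<xi>_def dist_norm)
  moreover have "\<phi> (x + s *\<^sub>R u + s *\<^sub>R w) - \<phi> (x + s *\<^sub>R u) - \<phi> (x + s *\<^sub>R w) + \<phi> x = s^2 * (DF \<xi> w \<bullet> u)"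
  proof -
    have eqk: "(x + s *\<^sub>R w) + s *\<^sub>R u = x + s *\<^sub>R u + s *\<^sub>R w" by (simp add: algebra_simps)
    have "\<phi> (x + s *\<^sub>R u + s *\<^sub>R w) - \<phi> (x + s *\<^sub>R u) - \<phi> (x + s *\<^sub>R w) + \<phi> x = k s - k 0"
      unfolding k_def eqk by simp
    also have "\<dots> = s * k' \<alpha>1" using a1 by simp
    also have "k' \<alpha>1 = m s - m 0" unfolding k'_def m_def by (simp add: inner_diff_left)
    also have "m s - m 0 = s * (DF \<xi> w \<bullet> u)" using b1 unfolding m'_def \<xi>_def by simp
    finally show ?thesis by (simp add: power2_eq_square)
  qed
  ultimately show ?thesis by blast
qed

lemma abs_aux:
  fixes A B P Q :: real
  assumes "\<bar>A - Q\<bar> < \<bar>P - Q\<bar> / 2" "\<bar>B - P\<bar> < \<bar>P - Q\<bar> / 2" "A = B"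
  shows False
  using assms by (auto simp: abs_if split: if_split_asm)

lemma schwarz:
  fixes \<phi> :: "'a::euclidean_space \<Rightarrow> real" and F :: "'a \<Rightarrow> 'a" and DF :: "'a \<Rightarrow> 'a \<Rightarrow> 'a"
  assumes U: "open U" "x \<in> U"
    and d\<phi>: "\<And>y. y \<in> U \<Longrightarrow> (\<phi> has_derivative (\<lambda>h. F y \<bullet> h)) (at y)"
    and dF: "\<And>y. y \<in> U \<Longrightarrow> (F has_derivative DF y) (at y)"
    and cF: "\<And>h. continuous_on U (\<lambda>y. DF y h)"
  shows "DF x u \<bullet> w = DF x w \<bullet> u"
proof (rule ccontr)
  assume ne: "DF x u \<bullet> w \<noteq> DF x w \<bullet> u"
  define c where "c = \<bar>DF x u \<bullet> w - DF x w \<bullet> u\<bar>"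
  have c: "c > 0" using ne by (simp add: c_def)
  have ct: "continuous (at x) (\<lambda>y. DF y a \<bullet> b)" for a b
  proof -
    have "isCont (\<lambda>y. DF y a) x" using cF[of a] U continuous_on_eq_continuous_at by blast
    then show ?thesis by (intro continuous_intros)
  qed
  obtain d1 where d1: "d1 > 0" "\<And>y. dist y x < d1 \<Longrightarrow> dist (DF y w \<bullet> u) (DF x w \<bullet> u) < c / 2"
    using ct[of w u] c unfolding continuous_at_eps_delta by (meson half_gt_zero)
  obtain d2 where d2: "d2 > 0" "\<And>y. dist y x < d2 \<Longrightarrow> dist (DF y u \<bullet> w) (DF x u \<bullet> w) < c / 2"
    using ct[of u w] c unfolding continuous_at_eps_delta by (meson half_gt_zero)
  obtain d0 where d0: "d0 > 0" "ball x d0 \<subseteq> U" using U open_contains_ball by blast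
  define R where "R = min d0 (min d1 d2)"
  have R: "R > 0" using d0 d1 d2 by (simp add: R_def)
  define k where "k = norm u + norm w + 1"
  define s where "s = R / (2 * k)"
  have npos: "k > 0" unfolding k_def using norm_ge_zero[of u] norm_ge_zero[of w] by linarith
  have s: "s > 0" using R npos by (simp add: s_def)
  have sR: "s * (norm u + norm w) < R"
  proof -
    have "s * (norm u + norm w) \<le> s * k" using s unfolding k_def by simp
    also have "\<dots> = R / 2" using npos by (simp add: s_def field_simps)
    finally show ?thesis using R by simp
  qed
  have "R \<le> d0" unfolding R_def by simp
  then have "s * (norm u + norm w) < d0" using sR by linarith
  then have "cball x (s * (norm u + norm w)) \<subseteq> ball x d0" by (auto simp: subset_eq)
  then have sub1: "cball x (s * (norm u + norm w)) \<subseteq> U" using d0(2) by blast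
  have sub2: "cball x (s * (norm w + norm u)) \<subseteq> U" using sub1 by (simp add: add.commute)
  obtain \<xi>1 where x1: "dist \<xi>1 x \<le> s * (norm u + norm w)"
    "\<phi> (x + s *\<^sub>R u + s *\<^sub>R w) - \<phi> (x + s *\<^sub>R u) - \<phi> (x + s *\<^sub>R w) + \<phi> x = s^2 * (DF \<xi>1 w \<bullet> u)"
    using mixed[OF d\<phi> dF s sub1] by blast
  obtain \<xi>2 where x2: "dist \<xi>2 x \<le> s * (norm w + norm u)"
    "\<phi> (x + s *\<^sub>R w + s *\<^sub>R u) - \<phi> (x + s *\<^sub>R w) - \<phi> (x + s *\<^sub>R u) + \<phi> x = s^2 * (DF \<xi>2 u \<bullet> w)"
    using mixed[OF d\<phi> dF s sub2] by blast
  have "x + s *\<^sub>R w + s *\<^sub>R u = x + s *\<^sub>R u + s *\<^sub>R w" by (simp add: algebra_simps)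
  then have "\<phi> (x + s *\<^sub>R w + s *\<^sub>R u) = \<phi> (x + s *\<^sub>R u + s *\<^sub>R w)" by (rule arg_cong)
  then have "s^2 * (DF \<xi>1 w \<bullet> u) = s^2 * (DF \<xi>2 u \<bullet> w)" using x1(2) x2(2) by linarith
  then have eq: "DF \<xi>1 w \<bullet> u = DF \<xi>2 u \<bullet> w" using s by simp
  have "dist \<xi>1 x < d1" using x1(1) sR unfolding R_def by linarith
  then have e1: "\<bar>DF \<xi>1 w \<bullet> u - DF x w \<bullet> u\<bar> < c / 2" using d1(2) by (simp add: dist_real_def)
  have "dist \<xi>2 x < d2" using x2(1) sR unfolding R_def by (simp add: add.commute)
  then have e2: "\<bar>DF \<xi>2 u \<bullet> w - DF x u \<bullet> w\<bar> < c / 2" using d2(2) by (simp add: dist_real_def)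
  show False using abs_aux[OF e1[unfolded c_def] e2[unfolded c_def] eq] .
qed

context rset begin

definition phi :: "'a \<Rightarrow> real" where
  "phi z = z \<bullet> closest_point M z - (closest_point M z \<bullet> closest_point M z) / 2"

lemma phi_ineq:
  assumes y: "y \<in> tube M tM" and z: "z \<in> tube M tM"
  shows "0 \<le> phi z - phi y - closest_point M y \<bullet> (z - y)"
    "phi z - phi y - closest_point M y \<bullet> (z - y) \<le> (z - y) \<bullet> (closest_point M z - closest_point M y)"
proof -
  define a where "a = closest_point M y"
  define c where "c = closest_point M z"
  have aM: "a \<in> M" "\<forall>q\<in>M. dist y a \<le> dist y q" using tube_cp[OF y order_refl] unfolding a_def by auto
  have cM: "c \<in> M" "\<forall>q\<in>M. dist z c \<le> dist z q" using tube_cp[OF z order_refl] unfolding c_def by auto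
  have "dist z c \<le> dist z a" using cM aM by blast
  then have "(dist z c)^2 \<le> (dist z a)^2" by (rule power_mono) simp
  then have N1: "(z - c) \<bullet> (z - c) \<le> (z - a) \<bullet> (z - a)" by (simp add: dist_norm power2_norm_eq_inner)
  have "dist y a \<le> dist y c" using cM aM by blast
  then have "(dist y a)^2 \<le> (dist y c)^2" by (rule power_mono) simp
  then have N2: "(y - a) \<bullet> (y - a) \<le> (y - c) \<bullet> (y - c)" by (simp add: dist_norm power2_norm_eq_inner)
  have pz: "phi z = z \<bullet> c - (c \<bullet> c) / 2" unfolding phi_def c_def ..
  have py: "phi y = y \<bullet> a - (a \<bullet> a) / 2" unfolding phi_def a_def ..
  have sq: "(p - q) \<bullet> (p - q) = p \<bullet> p - 2 * (p \<bullet> q) + q \<bullet> q" for p q :: 'a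
    by (simp add: inner_diff_left inner_diff_right inner_commute)
  have N1': "z \<bullet> z - 2 * (z \<bullet> c) + c \<bullet> c \<le> z \<bullet> z - 2 * (z \<bullet> a) + a \<bullet> a" using N1 unfolding sq .
  have N2': "y \<bullet> y - 2 * (y \<bullet> a) + a \<bullet> a \<le> y \<bullet> y - 2 * (y \<bullet> c) + c \<bullet> c" using N2 unfolding sq .
  have i1: "a \<bullet> (z - y) = z \<bullet> a - y \<bullet> a" by (simp add: inner_diff_right inner_commute)
  have i2: "(z - y) \<bullet> (c - a) = z \<bullet> c - z \<bullet> a - y \<bullet> c + y \<bullet> a" by (simp add: inner_diff_left inner_diff_right)
  show "0 \<le> phi z - phi y - closest_point M y \<bullet> (z - y)"
    unfolding pz py a_def[symmetric] i1 using N1' by linarith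
  show "phi z - phi y - closest_point M y \<bullet> (z - y) \<le> (z - y) \<bullet> (closest_point M z - closest_point M y)"
    unfolding pz py a_def[symmetric] c_def[symmetric] i1 i2 using N2' by linarith
qed

lemma phi_deriv:
  assumes y: "y \<in> tube M tM"
  shows "(phi has_derivative (\<lambda>h. closest_point M y \<bullet> h)) (at y)"
  unfolding has_derivative_at_alt
proof (intro conjI allI impI)
  show "bounded_linear (\<lambda>h. closest_point M y \<bullet> h)" by (rule bounded_linear_inner_right)
  fix e :: real assume e: "e > 0"
  obtain d0 where d0: "d0 > 0" "ball y d0 \<subseteq> tube M tM" using open_tube y open_contains_ball by blast
  have "continuous (at y) (closest_point M)" using has_derivative_continuous[OF Dp_deriv[OF y]] .
  then obtain d1 where d1: "d1 > 0" "\<And>z. dist z y < d1 \<Longrightarrow> dist (closest_point M z) (closest_point M y) < e"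
    using e unfolding continuous_at_eps_delta by blast
  show "\<exists>d>0. \<forall>z. norm (z - y) < d \<longrightarrow>
      norm (phi z - phi y - closest_point M y \<bullet> (z - y)) \<le> e * norm (z - y)"
  proof (intro exI[of _ "min d0 d1"] conjI allI impI)
    show "min d0 d1 > 0" using d0 d1 by simp
    fix z assume z: "norm (z - y) < min d0 d1"
    have zt: "z \<in> tube M tM" using z d0 by (auto simp: dist_norm norm_minus_commute)
    have cz: "norm (closest_point M z - closest_point M y) \<le> e"
      using d1(2)[of z] z by (simp add: dist_norm)
    have "(z - y) \<bullet> (closest_point M z - closest_point M y) \<le> norm (z - y) * norm (closest_point M z - closest_point M y)"
      using Cauchy_Schwarz_ineq2 by (metis abs_le_D1)
    also have "\<dots> \<le> norm (z - y) * e" using cz by (simp add: mult_left_mono)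
    finally show "norm (phi z - phi y - closest_point M y \<bullet> (z - y)) \<le> e * norm (z - y)"
      using phi_ineq[OF y zt] by (simp add: mult.commute)
  qed
qed

lemma Dp_sym:
  assumes x: "x \<in> tube M tM"
  shows "Dp x u \<bullet> w = u \<bullet> Dp x w"
proof -
  have "Dp x u \<bullet> w = Dp x w \<bullet> u"
    by (rule schwarz[OF open_tube x phi_deriv Dp_deriv Dp_cont])
  then show ?thesis by (simp add: inner_commute)
qed

end


theorem lemma7:
  fixes M :: "'a::euclidean_space set"
    and tM :: real
    and f :: "'a \<Rightarrow> real" and gradf :: "'a \<Rightarrow> 'a"
    and C L \<eta> \<tau> \<epsilon> \<tau>t \<delta> :: real
    and s :: "'a \<Rightarrow> 'a" and s' :: "'a \<Rightarrow> 'a \<Rightarrow>\<^sub>L 'a"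
    and xs :: 'a
  assumes M_compact: "compact M"
    and M_manifold: "C2_submanifold M"
    and reach: "is_reach M tM" and reach_pos: "tM > 0"
    and f_deriv: "\<And>x. (f has_derivative (\<lambda>v. gradf x \<bullet> v)) (at x)"
    and gradf_cont: "continuous_on UNIV gradf"
    and gradf_lip: "\<exists>K. K-lipschitz_on (tube M tM) gradf"
    and C_def: "C = (SUP x\<in>tube M tM. norm (gradf x))"
    and L_def: "L = Inf {K. K-lipschitz_on (tube M tM) gradf}"
    and eta: "\<eta> \<ge> 0"
    and tau: "0 < \<tau>" "\<tau> < tM"
    and eps: "\<epsilon> > 0"
    and s_deriv: "\<And>x. (s has_derivative blinfun_apply (s' x)) (at x)"
    and s'_cont: "continuous_on UNIV s'"
    and s_close: "\<And>x. x \<in> tube M \<tau> \<Longrightarrow> norm (s x - closest_point M x) < \<epsilon>"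
    and s'_close: "\<And>x. x \<in> tube M \<tau> \<Longrightarrow>
          onorm (\<lambda>v. blinfun_apply (s' x) v - frechet_derivative (closest_point M) (at x) v) < \<epsilon>"
    and s_maps: "s ` tube M \<tau> \<subseteq> tube M \<tau>"
    and taut: "0 < \<tau>t" "\<tau>t \<le> \<tau>"
    and delta: "\<delta> > 0"
    and xs_in: "xs \<in> tube M \<tau>t"
    and G_small: "norm (blinfun_apply (s' xs) (gradf (s xs)) + \<eta> *\<^sub>R (xs - s xs)) \<le> \<delta>"
  shows "norm (manifold_grad M gradf (closest_point M xs))
           \<le> 2 * (L + C + \<eta>) * \<epsilon> + 2 * ((\<tau>t / tM) / (1 - \<tau>t / tM)) * C + \<delta>"
proof -
  interpret R: rset M tM by unfold_locales (rule M_compact reach reach_pos)+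
  have tt: "\<tau>t < tM" using taut tau by linarith
  have xs_tM: "xs \<in> tube M tM" using xs_in R.tube_mono[of \<tau>t tM] tt by auto
  have xs_tau: "xs \<in> tube M \<tau>" using xs_in R.tube_mono[of \<tau>t \<tau>] taut by auto
  define p where "p = closest_point M xs"
  define v where "v = xs - p"
  define r where "r = norm v"
  have pM: "p \<in> M" and vN: "v \<in> normal_space M p" and rlt: "r < \<tau>t"
    using R.tube_cp[OF xs_in] tt unfolding p_def v_def r_def by auto
  have r0: "r \<ge> 0" unfolding r_def by simp
  define T where "T = tangent_space M p"
  have Tsub: "subspace T" unfolding T_def using R.TS_subspace[OF pM] .
  define B where "B = R.Dp xs"
  have Blin: "linear B" unfolding B_def using R.Dp_lin[OF xs_tM] .
  have Bsym: "B a \<bullet> b = a \<bullet> B b" for a b unfolding B_def using R.Dp_sym[OF xs_tM] .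
  have BT: "B a \<in> T" for a unfolding B_def T_def p_def using R.range_TS[OF xs_tM] .
  define g where "g = gradf p"
  define t where "t = orth_proj T g"
  have tT: "t \<in> T" and gt: "\<And>w. w \<in> T \<Longrightarrow> (g - t) \<bullet> w = 0"
    using orth_proj_props[OF Tsub] unfolding t_def by auto
  have mg: "manifold_grad M gradf (closest_point M xs) = t"
    unfolding manifold_grad_def t_def T_def g_def p_def ..
  define T' where "T' = tM * (r + \<tau>t) / (2 * \<tau>t)"
  have T'pos: "T' > 0" unfolding T'_def using reach_pos taut r0 by simp
  have T'lt: "T' < tM"
  proof -
    have "(r + \<tau>t) / (2 * \<tau>t) < 1" using rlt taut by (simp add: divide_less_eq)
    then have "tM * ((r + \<tau>t) / (2 * \<tau>t)) < tM * 1" using reach_pos by (rule mult_strict_left_mono)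
    then show ?thesis unfolding T'_def by simp
  qed
  have rT': "r < T'"
  proof -
    have m1: "\<tau>t * (r + \<tau>t) \<le> tM * (r + \<tau>t)" using tt r0 taut by (intro mult_right_mono) auto
    have "\<tau>t * (r + \<tau>t) / (2 * \<tau>t) \<le> T'" unfolding T'_def
      by (rule divide_right_mono[OF m1]) (use taut in simp)
    moreover have "\<tau>t * (r + \<tau>t) / (2 * \<tau>t) = (r + \<tau>t) / 2" using taut by simp
    ultimately have h: "(r + \<tau>t) / 2 \<le> T'" by simp
    have "r < (r + \<tau>t) / 2" using rlt by (simp add: field_simps)
    then show ?thesis using h by (rule order_less_le_trans)
  qed
  define \<rho> where "\<rho> = r / T'"
  define \<rho>t where "\<rho>t = \<tau>t / tM"
  have \<rho>0: "0 \<le> \<rho>" "\<rho> < 1" unfolding \<rho>_def using r0 T'pos rT' by auto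
  have \<rho>\<rho>t: "\<rho> \<le> \<rho>t"
  proof -
    have "r * tM \<le> \<tau>t * T'"
    proof -
      have "\<tau>t * T' = tM * (r + \<tau>t) / 2" unfolding T'_def using taut by simp
      moreover have "r * tM \<le> tM * (r + \<tau>t) / 2" using rlt reach_pos by (simp add: algebra_simps)
      ultimately show ?thesis by simp
    qed
    then show ?thesis unfolding \<rho>_def \<rho>t_def using T'pos reach_pos by (simp add: divide_le_eq le_divide_eq mult.commute)
  qed
  have \<rho>t1: "\<rho>t < 1" "0 \<le> \<rho>t" unfolding \<rho>t_def using tt taut reach_pos by auto
  define Kt where "Kt = \<rho>t / (1 - \<rho>t)"
  have KK: "\<rho> / (1 - \<rho>) \<le> Kt" unfolding Kt_def by (rule frac_le) (use \<rho>0 \<rho>t1 \<rho>\<rho>t in auto)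
  have Kt0: "Kt \<ge> 0" unfolding Kt_def using \<rho>t1 by simp
  have Bt: "norm (B t - t) \<le> Kt * norm t"
  proof -
    have "norm (B t - t) \<le> \<rho> / (1 - \<rho>) * norm t"
    proof (rule linalg[OF Tsub Blin Bsym BT _ _ \<rho>0 tT])
      fix w assume w: "w \<in> T"
      have "T' * \<bar>(norm (B w))^2 - B w \<bullet> w\<bar> \<le> r * (norm (B w))^2"
        using R.C12[OF xs_tM T'pos T'lt, of w] unfolding B_def r_def v_def p_def .
      then show "\<bar>(norm (B w))^2 - B w \<bullet> w\<bar> \<le> \<rho> * (norm (B w))^2"
        unfolding \<rho>_def using T'pos by (simp add: le_divide_eq mult.commute)
    next
      fix w assume w: "w \<in> T" "B w = 0"
      show "w = 0"
        by (rule R.C3[OF xs_tM T'pos T'lt _ _ w(2)[unfolded B_def]])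
          (use rT' w(1) in \<open>auto simp: r_def v_def p_def T_def\<close>)
    qed
    also have "\<dots> \<le> Kt * norm t" using KK by (rule mult_right_mono) simp
    finally show ?thesis .
  qed
  define A where "A = blinfun_apply (s' xs)"
  define gs where "gs = gradf (s xs)"
  have fd: "frechet_derivative (closest_point M) (at xs) = B"
    unfolding B_def using frechet_derivative_at[OF R.Dp_deriv[OF xs_tM]] by simp
  have AB: "norm (A u - B u) \<le> \<epsilon> * norm u" for u
  proof -
    have bl: "bounded_linear (\<lambda>v. A v - B v)" unfolding A_def B_def
      by (intro bounded_linear_sub blinfun.bounded_linear_right R.Dp_blin[OF xs_tM])
    have "norm (A u - B u) \<le> onorm (\<lambda>v. A v - B v) * norm u" using onorm[OF bl] by simp
    also have "\<dots> \<le> \<epsilon> * norm u" using s'_close[OF xs_tau] unfolding fd A_def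
      by (intro mult_right_mono) auto
    finally show ?thesis .
  qed
  have sp: "norm (s xs - p) < \<epsilon>" using s_close[OF xs_tau] unfolding p_def .
  have sxt: "s xs \<in> tube M tM" using s_maps xs_tau R.tube_mono[of \<tau> tM] tau by auto
  have pt: "p \<in> tube M tM" using R.M_tube pM reach_pos by auto
  have bdd: "bdd_above ((\<lambda>y. norm (gradf y)) ` tube M tM)"
  proof -
    obtain Bm where Bm: "\<forall>q\<in>M. norm q \<le> Bm" using compact_imp_bounded[OF M_compact] bounded_iff by blast
    have "norm y \<le> Bm + tM" if yt: "y \<in> tube M tM" for y
    proof -
      obtain z where z: "z \<in> normal_bundle M tM" "y = (\<lambda>(p, v). p + v) z" using yt unfolding tube_def by blast
      obtain q n where "z = (q, n)" by (cases z)
      then have "q \<in> M" "norm n < tM" "y = q + n" using z unfolding normal_bundle_def by auto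
      then show ?thesis using Bm norm_triangle_ineq[of q n] by force
    qed
    then have "bounded (tube M tM)" unfolding bounded_iff by blast
    then have "compact (closure (tube M tM))" using bounded_closure by (auto simp: compact_eq_bounded_closed)
    moreover have "continuous_on (closure (tube M tM)) gradf" using gradf_cont continuous_on_subset by blast
    ultimately have "compact (gradf ` closure (tube M tM))" using compact_continuous_image by blast
    then have "bounded (gradf ` tube M tM)"
      using bounded_closure_image compact_imp_bounded by blast
    then obtain Bd where "\<forall>z\<in>gradf ` tube M tM. norm z \<le> Bd" unfolding bounded_iff by blast
    then show ?thesis by (auto intro: bdd_aboveI2)
  qed
  have Cb: "norm (gradf y) \<le> C" if "y \<in> tube M tM" for y
    unfolding C_def using cSUP_upper[OF that bdd] .
  have C0: "C \<ge> 0" using Cb[OF pt] norm_ge_zero[of "gradf p"] by linarith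
  have gsC: "norm gs \<le> C" unfolding gs_def using Cb[OF sxt] .
  define LS where "LS = {K. K-lipschitz_on (tube M tM) gradf}"
  have LSne: "LS \<noteq> {}" using gradf_lip unfolding LS_def by auto
  have L0: "L \<ge> 0" unfolding L_def LS_def[symmetric]
    by (rule cInf_greatest[OF LSne]) (auto simp: LS_def intro: lipschitz_on_nonneg)
  have Lip: "dist (gradf a) (gradf b) \<le> L * dist a b" if "a \<in> tube M tM" "b \<in> tube M tM" for a b
  proof (cases "a = b")
    case True then show ?thesis by simp
  next
    case False
    then have d: "dist a b > 0" by simp
    have "dist (gradf a) (gradf b) / dist a b \<le> L" unfolding L_def LS_def[symmetric]
    proof (rule cInf_greatest[OF LSne])
      fix K assume "K \<in> LS"
      then have "dist (gradf a) (gradf b) \<le> K * dist a b" unfolding LS_def using lipschitz_onD that by blast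
      then show "dist (gradf a) (gradf b) / dist a b \<le> K" using d by (simp add: divide_le_eq)
    qed
    then show ?thesis using d by (simp add: divide_le_eq)
  qed
  have ggs: "norm (g - gs) \<le> L * \<epsilon>"
  proof -
    have "norm (g - gs) \<le> L * dist p (s xs)" using Lip[OF pt sxt] unfolding g_def gs_def by (simp add: dist_norm)
    also have "\<dots> \<le> L * \<epsilon>" using sp L0 by (intro mult_left_mono) (auto simp: dist_norm norm_minus_commute)
    finally show ?thesis .
  qed
  define G where "G = A gs + \<eta> *\<^sub>R (xs - s xs)"
  have GS: "norm G \<le> \<delta>" using G_small unfolding G_def A_def gs_def .
  have tv0: "t \<bullet> (xs - p) = 0"
    using vN tT unfolding normal_space_def T_def v_def by (auto simp: inner_commute)
  have i1: "t \<bullet> G = t \<bullet> A gs + \<eta> * (t \<bullet> (xs - s xs))" unfolding G_def by (simp add: inner_add_right)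
  have i2: "t \<bullet> (xs - s xs) = t \<bullet> (xs - p) + t \<bullet> (p - s xs)" by (simp add: inner_diff_right)
  have i3: "t \<bullet> (B gs - A gs) = t \<bullet> B gs - t \<bullet> A gs" by (simp add: inner_diff_right)
  have i4: "(t - B t) \<bullet> gs = t \<bullet> gs - B t \<bullet> gs" by (simp add: inner_diff_left)
  have i5: "t \<bullet> (g - gs) = t \<bullet> g - t \<bullet> gs" by (simp add: inner_diff_right)
  have i6: "t \<bullet> B gs = B t \<bullet> gs" using Bsym[of t gs] by simp
  have ident: "t \<bullet> g = t \<bullet> G - \<eta> * (t \<bullet> (p - s xs)) + t \<bullet> (B gs - A gs) + (t - B t) \<bullet> gs + t \<bullet> (g - gs)"
    using i1 i2 i3 i4 i5 i6 tv0 by (simp add: algebra_simps)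
  have tg: "t \<bullet> g = (norm t)^2"
  proof -
    have h: "g \<bullet> t - t \<bullet> t = 0" using gt[OF tT] by (simp only: inner_diff_left)
    have h2: "t \<bullet> g = g \<bullet> t" by (rule inner_commute)
    show ?thesis unfolding power2_norm_eq_inner using h h2 by linarith
  qed
  have CS: "\<bar>a \<bullet> b\<bar> \<le> norm a * norm b" for a b :: 'a by (rule Cauchy_Schwarz_ineq2)
  have b1: "\<bar>t \<bullet> G\<bar> \<le> norm t * \<delta>" using CS[of t G] GS by (meson mult_left_mono norm_ge_zero order_trans)
  have b2: "\<bar>\<eta> * (t \<bullet> (p - s xs))\<bar> \<le> norm t * (\<eta> * \<epsilon>)"
  proof -
    have "\<bar>t \<bullet> (p - s xs)\<bar> \<le> norm t * \<epsilon>"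
      using CS[of t "p - s xs"] sp by (smt (verit) mult_left_mono norm_ge_zero norm_minus_commute)
    then have mo: "\<eta> * \<bar>t \<bullet> (p - s xs)\<bar> \<le> \<eta> * (norm t * \<epsilon>)" using eta by (rule mult_left_mono)
    have e: "\<bar>\<eta> * (t \<bullet> (p - s xs))\<bar> = \<eta> * \<bar>t \<bullet> (p - s xs)\<bar>" using eta by (simp add: abs_mult)
    have q: "\<eta> * (norm t * \<epsilon>) = norm t * (\<eta> * \<epsilon>)" by (simp add: ac_simps)
    show ?thesis unfolding e using mo q by linarith
  qed
  have b3: "\<bar>t \<bullet> (B gs - A gs)\<bar> \<le> norm t * (\<epsilon> * C)"
  proof -
    have "norm (B gs - A gs) \<le> \<epsilon> * C"
      using AB[of gs] gsC eps by (smt (verit) mult_left_mono norm_minus_commute)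
    then show ?thesis using CS[of t "B gs - A gs"] by (meson mult_left_mono norm_ge_zero order_trans)
  qed
  have b4: "\<bar>(t - B t) \<bullet> gs\<bar> \<le> norm t * (Kt * C)"
  proof -
    have "\<bar>(t - B t) \<bullet> gs\<bar> \<le> norm (t - B t) * norm gs" by (rule CS)
    also have "\<dots> \<le> (Kt * norm t) * C"
      using Bt gsC Kt0 by (intro mult_mono) (auto simp: norm_minus_commute)
    finally show ?thesis by (simp add: algebra_simps)
  qed
  have b5: "\<bar>t \<bullet> (g - gs)\<bar> \<le> norm t * (L * \<epsilon>)"
    using CS[of t "g - gs"] ggs by (meson mult_left_mono norm_ge_zero order_trans)
  define W where "W = \<delta> + \<eta> * \<epsilon> + \<epsilon> * C + Kt * C + L * \<epsilon>"
  have "(norm t)^2 \<le> norm t * W"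
  proof -
    have "norm t * W = norm t * \<delta> + norm t * (\<eta> * \<epsilon>) + norm t * (\<epsilon> * C) + norm t * (Kt * C) + norm t * (L * \<epsilon>)"
      unfolding W_def by (simp add: distrib_left)
    then show ?thesis using ident tg b1 b2 b3 b4 b5 by linarith
  qed
  then have nW: "norm t \<le> W"
  proof (cases "norm t = 0")
    case True
    have "W \<ge> 0" unfolding W_def using delta eta eps C0 Kt0 L0 by simp
    then show ?thesis using True by simp
  next
    case False
    then have "norm t > 0" by simp
    then show ?thesis using \<open>(norm t)^2 \<le> norm t * W\<close> by (simp add: power2_eq_square)
  qed
  have "W \<le> 2 * (L + C + \<eta>) * \<epsilon> + 2 * ((\<tau>t / tM) / (1 - \<tau>t / tM)) * C + \<delta>"
  proof -
    have "2 * ((\<tau>t / tM) / (1 - \<tau>t / tM)) * C = 2 * (Kt * C)" unfolding Kt_def \<rho>t_def by simp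
    moreover have "Kt * C \<ge> 0" "L * \<epsilon> \<ge> 0" "\<eta> * \<epsilon> \<ge> 0" "\<epsilon> * C \<ge> 0"
      using Kt0 C0 L0 eps eta by auto
    moreover have "2 * (L + C + \<eta>) * \<epsilon> = 2 * (L * \<epsilon>) + 2 * (\<epsilon> * C) + 2 * (\<eta> * \<epsilon>)"
      by (simp add: algebra_simps)
    ultimately show ?thesis unfolding W_def by linarith
  qed
  then show ?thesis using nW mg by simp
qed


end
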